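(* Let $P$ be the uniform probability distribution on the equilateral triangle with vertices $(0,0)$, $(1,0)$, $(\frac12,\frac{\sqrt3}{2})$. Let $N\ge3$ be an integer and $n=N(N+1)/2$. Then the $n$th quantization error of $P$ satisfies \[V_n(P)\le \frac{45N^3-28\sqrt{21}N^2+(301-28\sqrt{21})N-98}{324N^3(N-1)^2},\] and this upper bound equals $\frac{5}{36N^2}-\frac{14\sqrt{21}-45}{162N^3}+O(N^{-4})$ as $N\to\infty$.
   Context: For a Borel probability measure $P$ on $\mathbb R^2$ with finite second moment and $n\ge1$, the $n$th quantization error is $V_n(P)=\inf\{\int \min_{a\in\alpha}\|x-a\|^2\,dP(x): \alpha\subset\mathbb R^2,\ \mathrm{card}(\alpha)\le n\}$, where $\|\cdot\|$ is the Euclidean norm. The uniform distribution on the triangle has density $\frac{4}{\sqrt3}$ on the triangle and $0$ elsewhere. *)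

theory Defs
  imports "HOL-Analysis.Analysis" "HOL-Library.Landau_Symbols"
begin

definition eq_triangle :: "(real^2) set" where
  "eq_triangle = convex hull {vector [0, 0], vector [1, 0], vector [1/2, sqrt 3 / 2]}"

definition unif_triangle :: "(real^2) measure" where
  "unif_triangle = density lborel (\<lambda>x. ennreal (indicator eq_triangle x * (4 / sqrt 3)))"

definition distortion :: "('a::real_normed_vector) measure \<Rightarrow> 'a set \<Rightarrow> real" where
  "distortion M \<alpha> = (\<integral>x. Min ((\<lambda>a. (norm (x - a))\<^sup>2) ` \<alpha>) \<partial>M)"

definition quant_err :: "('a::real_normed_vector) measure \<Rightarrow> nat \<Rightarrow> real" where
  "quant_err M n = Inf {distortion M \<alpha> | \<alpha>. finite \<alpha> \<and> \<alpha> \<noteq> {} \<and> card \<alpha> \<le> n}"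

definition tri_bound :: "nat \<Rightarrow> real" where
  "tri_bound N = (45 * real N ^ 3 - 28 * sqrt 21 * real N ^ 2 + (301 - 28 * sqrt 21) * real N - 98)
                 / (324 * real N ^ 3 * (real N - 1)\<^sup>2)"

end

theory Submission
  imports Defs "HOL-Real_Asymp.Real_Asymp"
begin

definition Qf :: "real \<Rightarrow> real \<Rightarrow> real" where "Qf x y = x\<^sup>2 + x*y + y\<^sup>2"
definition Af :: "real \<Rightarrow> real \<Rightarrow> real" where "Af x y = x^3/3 + x\<^sup>2*y/2 + x*y\<^sup>2"
definition Ef :: "real \<Rightarrow> real \<Rightarrow> real \<Rightarrow> real" where
  "Ef g b w = g^3/3*w + (g\<^sup>2*b + g\<^sup>2/2)*w\<^sup>2/2 + (g*b\<^sup>2 + g*b + g)*w^3/3 + (b^3/3 + b\<^sup>2/2 + b)*w^4/4"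
definition Vf :: "real \<Rightarrow> real \<Rightarrow> real \<Rightarrow> real \<Rightarrow> real \<Rightarrow> real \<Rightarrow> real \<Rightarrow> real \<Rightarrow> real" where
  "Vf a b l0 l1 h0 h1 p q = Ef (h0 - p + h1*q) h1 (b-q) - Ef (h0 - p + h1*q) h1 (a-q)
      - Ef (l0 - p + l1*q) l1 (b-q) + Ef (l0 - p + l1*q) l1 (a-q)"
definition vt :: "real \<Rightarrow> real \<Rightarrow> real \<Rightarrow> real \<Rightarrow> real \<Rightarrow> real \<Rightarrow> (real \<times> real) set" where
  "vt a b l0 l1 h0 h1 = {z. a \<le> snd z \<and> snd z \<le> b \<and> l0 + l1 * snd z \<le> fst z \<and> fst z \<le> h0 + h1 * snd z}"

lemma Qf_nonneg: "0 \<le> Qf x y"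
proof -
  have "0 \<le> (x + y/2)\<^sup>2 + 3/4*y\<^sup>2" by simp
  also have "\<dots> = Qf x y" by (simp add: Qf_def power2_eq_square algebra_simps)
  finally show ?thesis .
qed

lemma ftc_real:
  fixes F f :: "real \<Rightarrow> real"
  assumes "a \<le> b" "\<And>x. (F has_real_derivative f x) (at x)"
  shows "(f has_integral (F b - F a)) {a..b}"
  by (rule fundamental_theorem_of_calculus[OF assms(1)])
     (auto simp: has_real_derivative_iff_has_vector_derivative[symmetric] intro: has_field_derivative_at_within assms(2))

lemma Af_deriv: "((\<lambda>x. Af (x - p) y) has_real_derivative Qf (x - p) y) (at x)"
  unfolding Af_def Qf_def
  apply (rule derivative_eq_intros refl | simp)+
  done

lemma Ef_deriv: "((\<lambda>y. Ef g b (y - q)) has_real_derivative Af (g + b*(y-q)) (y - q)) (at y)"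
  unfolding Af_def Ef_def
  apply (rule derivative_eq_intros refl | simp)+
  by (simp add: field_simps eval_nat_numeral)

lemma vt_closed: "closed (vt a b l0 l1 h0 h1)"
  unfolding vt_def
  by (intro closed_Collect_conj closed_Collect_le continuous_intros)

lemma vt_borel[measurable]: "vt a b l0 l1 h0 h1 \<in> sets borel"
  using vt_closed by (rule borel_closed)

lemma affine_nonneg:
  fixes c0 c1 y a b :: real
  assumes "a \<le> y" "y \<le> b" "0 \<le> c0 + c1*a" "0 \<le> c0 + c1*b"
  shows "0 \<le> c0 + c1*y"
proof (cases "c1 \<ge> 0")
  case True
  then have "c1*a \<le> c1*y" using assms by (intro mult_left_mono) auto
  then show ?thesis using assms by linarith
next
  case False
  then have "c1*b \<le> c1*y" using assms by (intro mult_left_mono_neg) auto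
  then show ?thesis using assms by linarith
qed

lemma inner_int:
  assumes "l \<le> h"
  shows "((\<lambda>x. Qf (x - p) y) has_integral (Af (h - p) y - Af (l - p) y)) {l..h}"
  by (rule ftc_real[OF assms Af_deriv])

lemma vt_int:
  assumes ab: "a \<le> b" and la: "l0 + l1*a \<le> h0 + h1*a" and lb: "l0 + l1*b \<le> h0 + h1*b"
  shows "(\<integral>\<^sup>+z. indicator (vt a b l0 l1 h0 h1) z * ennreal (Qf (fst z - p) (snd z - q)) \<partial>lborel)
           = ennreal (Vf a b l0 l1 h0 h1 p q)"
proof -
  define f where "f = (\<lambda>z. indicator (vt a b l0 l1 h0 h1) z * ennreal (Qf (fst z - p) (snd z - q)))"
  define P where "P = (\<lambda>y. Af (h0 + h1*y - p) (y - q) - Af (l0 + l1*y - p) (y - q))"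
  have [measurable]: "(\<lambda>z::real\<times>real. Qf (fst z - p) (snd z - q)) \<in> borel_measurable borel"
    by (rule borel_measurable_continuous_onI) (simp add: Qf_def; intro continuous_intros)
  have meas: "f \<in> borel_measurable (lborel \<Otimes>\<^sub>M lborel)"
    unfolding f_def lborel_prod by measurable
  have "integral\<^sup>N lborel f = (\<integral>\<^sup>+y. (\<integral>\<^sup>+x. f (x,y) \<partial>lborel) \<partial>lborel)"
    using lborel_pair.nn_integral_snd[OF meas] lborel_prod[where 'a=real and 'b=real] by simp
  also have "\<dots> = (\<integral>\<^sup>+y. ennreal (P y) * indicator {a..b} y \<partial>lborel)"
  proof (rule nn_integral_cong)
    fix y :: real
    show "(\<integral>\<^sup>+x. f (x,y) \<partial>lborel) = ennreal (P y) * indicator {a..b} y"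
    proof (cases "y \<in> {a..b}")
      case True
      have le: "l0 + l1*y \<le> h0 + h1*y"
        using affine_nonneg[of a y b "h0 - l0" "h1 - l1"] True la lb by (auto simp: algebra_simps)
      have "(\<integral>\<^sup>+x. f (x,y) \<partial>lborel) = (\<integral>\<^sup>+x. ennreal (Qf (x - p) (y - q)) * indicator {l0 + l1*y..h0 + h1*y} x \<partial>lborel)"
        using True by (intro nn_integral_cong) (auto simp: f_def vt_def indicator_def)
      also have "\<dots> = ennreal (P y)"
        unfolding P_def
        by (rule nn_integral_has_integral_lebesgue'[OF _ inner_int[OF le]]) (simp add: Qf_nonneg)
      finally show ?thesis using True by simp
    next
      case False
      then have "\<And>x. f (x,y) = 0" by (auto simp: f_def vt_def)
      then show ?thesis using False by simp
    qed
  qed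
  also have "\<dots> = ennreal (Vf a b l0 l1 h0 h1 p q)"
  proof (rule nn_integral_has_integral_lebesgue')
    show "0 \<le> P y" if "y \<in> {a..b}" for y
    proof -
      have le: "l0 + l1*y \<le> h0 + h1*y"
        using affine_nonneg[of a y b "h0 - l0" "h1 - l1"] that la lb by (auto simp: algebra_simps)
      show ?thesis unfolding P_def
        by (rule has_integral_nonneg[OF inner_int[OF le]]) (simp add: Qf_nonneg)
    qed
    have d: "((\<lambda>y. Ef (h0 - p + h1*q) h1 (y-q) - Ef (l0 - p + l1*q) l1 (y-q)) has_real_derivative P y) (at y)" for y
    proof -
      have "((\<lambda>y. Ef (h0 - p + h1*q) h1 (y-q) - Ef (l0 - p + l1*q) l1 (y-q)) has_real_derivative
          Af ((h0 - p + h1*q) + h1*(y-q)) (y - q) - Af ((l0 - p + l1*q) + l1*(y-q)) (y - q)) (at y)"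
        by (intro derivative_intros Ef_deriv)
      moreover have "(h0 - p + h1*q) + h1*(y-q) = h0 + h1*y - p" "(l0 - p + l1*q) + l1*(y-q) = l0 + l1*y - p"
        by (simp_all add: algebra_simps)
      ultimately show ?thesis by (simp add: P_def)
    qed
    show "(P has_integral Vf a b l0 l1 h0 h1 p q) {a..b}"
      using ftc_real[OF ab d] by (simp add: Vf_def algebra_simps)
  qed
  finally show ?thesis by (simp add: f_def)
qed

lemma Vf_nonneg:
  assumes ab: "a \<le> b" and la: "l0 + l1*a \<le> h0 + h1*a" and lb: "l0 + l1*b \<le> h0 + h1*b"
  shows "0 \<le> Vf a b l0 l1 h0 h1 p q"
proof -
  define P where "P = (\<lambda>y. Af (h0 + h1*y - p) (y - q) - Af (l0 + l1*y - p) (y - q))"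
  have Pn: "0 \<le> P y" if "y \<in> {a..b}" for y
  proof -
    have le: "l0 + l1*y \<le> h0 + h1*y"
      using affine_nonneg[of a y b "h0 - l0" "h1 - l1"] that la lb by (auto simp: algebra_simps)
    show ?thesis unfolding P_def
      by (rule has_integral_nonneg[OF inner_int[OF le]]) (simp add: Qf_nonneg)
  qed
  have d: "((\<lambda>y. Ef (h0 - p + h1*q) h1 (y-q) - Ef (l0 - p + l1*q) l1 (y-q)) has_real_derivative P y) (at y)" for y
  proof -
    have "((\<lambda>y. Ef (h0 - p + h1*q) h1 (y-q) - Ef (l0 - p + l1*q) l1 (y-q)) has_real_derivative
        Af ((h0 - p + h1*q) + h1*(y-q)) (y - q) - Af ((l0 - p + l1*q) + l1*(y-q)) (y - q)) (at y)"
      by (intro derivative_intros Ef_deriv)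
    moreover have "(h0 - p + h1*q) + h1*(y-q) = h0 + h1*y - p" "(l0 - p + l1*q) + l1*(y-q) = l0 + l1*y - p"
      by (simp_all add: algebra_simps)
    ultimately show ?thesis by (simp add: P_def)
  qed
  have "(P has_integral Vf a b l0 l1 h0 h1 p q) {a..b}"
    using ftc_real[OF ab d] by (simp add: Vf_def algebra_simps)
  then show ?thesis by (rule has_integral_nonneg) (use Pn in auto)
qed


definition phi2 :: "real \<times> real \<Rightarrow> real^2" where
  "phi2 z = fst z *\<^sub>R axis 1 1 + snd z *\<^sub>R axis 2 1"

lemma phi2_nth[simp]: "phi2 z $ 1 = fst z" "phi2 z $ 2 = snd z"
  by (simp_all add: phi2_def axis_def)

lemma phi2_cont: "continuous_on UNIV phi2"
  unfolding phi2_def by (intro continuous_intros)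

lemma phi2_meas[measurable]: "phi2 \<in> borel_measurable borel"
  by (rule borel_measurable_continuous_onI[OF phi2_cont])

lemma prod_Basis_2: "(\<Prod>b\<in>(Basis::(real^2) set). f b) = f (axis 1 1) * f (axis 2 1)"
proof -
  have B: "(Basis::(real^2) set) = {axis 1 1, axis 2 1}"
    by (auto simp: Basis_vec_def UNIV_2)
  have "axis 1 (1::real) \<noteq> (axis 2 1 :: real^2)"
    by (simp add: axis_eq_axis)
  then show ?thesis unfolding B by simp
qed

lemma distr_phi2: "distr (lborel::(real\<times>real) measure) borel phi2 = lborel"
proof (rule lborel_eqI[symmetric])
  fix l u :: "real^2" assume le: "\<And>b. b\<in>Basis \<Longrightarrow> l\<bullet>b \<le> u\<bullet>b"
  have pre: "phi2 -` box l u = box (l$1, l$2) (u$1, u$2)"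
    by (auto simp: mem_box_cart mem_box Basis_prod_def forall_2)
  have "emeasure (distr lborel borel phi2) (box l u) = emeasure lborel (box (l$1, l$2) (u$1, u$2))"
    by (simp add: emeasure_distr pre)
  also have "\<dots> = (u$1 - l$1) * (u$2 - l$2)"
  proof -
    have h1: "l$1 \<le> u$1" using le[of "axis 1 1"] by (auto simp: Basis_vec_def inner_axis)
    have h2: "l$2 \<le> u$2" using le[of "axis 2 1"] by (auto simp: Basis_vec_def inner_axis)
    show ?thesis using h1 h2
      by (simp add: emeasure_lborel_box_eq Basis_prod_def ennreal_mult mult.commute)
  qed
  also have "\<dots> = (\<Prod>b\<in>Basis. (u - l) \<bullet> b)"
    by (simp add: prod_Basis_2 inner_axis)
  finally show "emeasure (distr lborel borel phi2) (box l u) = (\<Prod>b\<in>Basis. (u - l) \<bullet> b)" .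
qed simp

definition psi :: "real \<Rightarrow> real \<Rightarrow> real \<Rightarrow> real\<times>real \<Rightarrow> real^2" where
  "psi o1 o2 s z = phi2 (o1 + s*(fst z + snd z/2), o2 + s*(sqrt 3/2) * snd z)"

lemma psi_meas[measurable]: "psi o1 o2 s \<in> borel_measurable borel"
  by (rule borel_measurable_continuous_onI) (simp add: psi_def phi2_def; intro continuous_intros; simp)

lemma transfer:
  fixes g :: "real^2 \<Rightarrow> ennreal"
  assumes g[measurable]: "g \<in> borel_measurable borel" and s: "0 < s"
  shows "(\<integral>\<^sup>+x. g x \<partial>lborel) = ennreal (s\<^sup>2 * sqrt 3/2) * (\<integral>\<^sup>+z. g (psi o1 o2 s z) \<partial>lborel)"
proof -
  define a where "a = s * (sqrt 3 / 2)"
  have a: "0 < a" using s by (simp add: a_def)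
  have "(\<integral>\<^sup>+x. g x \<partial>lborel) = (\<integral>\<^sup>+z. g (phi2 z) \<partial>lborel)"
    by (subst distr_phi2[symmetric]) (simp add: nn_integral_distr)
  also have "\<dots> = (\<integral>\<^sup>+y. (\<integral>\<^sup>+x. g (phi2 (x,y)) \<partial>lborel) \<partial>lborel)"
    using lborel_pair.nn_integral_snd[of "\<lambda>z. g (phi2 z)"] lborel_prod[where 'a=real and 'b=real] by simp
  also have "\<dots> = ennreal a * (\<integral>\<^sup>+Y. (\<integral>\<^sup>+x. g (phi2 (x, o2 + a*Y)) \<partial>lborel) \<partial>lborel)"
    using nn_integral_real_affine[of "\<lambda>y. \<integral>\<^sup>+x. g (phi2 (x,y)) \<partial>lborel" a o2] a by simp
  also have "\<dots> = ennreal a * (\<integral>\<^sup>+Y. ennreal s * (\<integral>\<^sup>+X. g (psi o1 o2 s (X,Y)) \<partial>lborel) \<partial>lborel)"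
  proof -
    have "(\<integral>\<^sup>+x. g (phi2 (x, o2 + a*Y)) \<partial>lborel) = ennreal s * (\<integral>\<^sup>+X. g (psi o1 o2 s (X,Y)) \<partial>lborel)" for Y
    proof -
      have "(\<integral>\<^sup>+x. g (phi2 (x, o2 + a*Y)) \<partial>lborel) = ennreal s * (\<integral>\<^sup>+X. g (phi2 ((o1 + s*Y/2) + s*X, o2 + a*Y)) \<partial>lborel)"
        using nn_integral_real_affine[of "\<lambda>x. g (phi2 (x, o2 + a*Y))" s "o1 + s*Y/2"] s by simp
      also have "(\<lambda>X. g (phi2 ((o1 + s*Y/2) + s*X, o2 + a*Y))) = (\<lambda>X. g (psi o1 o2 s (X,Y)))"
        by (simp add: psi_def a_def algebra_simps)
      finally show ?thesis .
    qed
    then show ?thesis by simp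
  qed
  also have "\<dots> = ennreal a * ennreal s * (\<integral>\<^sup>+Y. (\<integral>\<^sup>+X. g (psi o1 o2 s (X,Y)) \<partial>lborel) \<partial>lborel)"
    by (subst nn_integral_cmult) (auto simp: mult.assoc)
  also have "(\<integral>\<^sup>+Y. (\<integral>\<^sup>+X. g (psi o1 o2 s (X,Y)) \<partial>lborel) \<partial>lborel) = (\<integral>\<^sup>+z. g (psi o1 o2 s z) \<partial>lborel)"
    using lborel_pair.nn_integral_snd[of "\<lambda>z. g (psi o1 o2 s z)"] lborel_prod[where 'a=real and 'b=real] by simp
  also have "ennreal a * ennreal s = ennreal (s\<^sup>2 * sqrt 3/2)"
    using a s by (simp add: ennreal_mult[symmetric] a_def power2_eq_square)
  finally show ?thesis .
qed


datatype pc = Pc real real real real real real real real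

fun pset :: "pc \<Rightarrow> (real\<times>real) set" where
  "pset (Pc a b l0 l1 h0 h1 p q) = vt a b l0 l1 h0 h1"
fun pfn :: "pc \<Rightarrow> real\<times>real \<Rightarrow> ennreal" where
  "pfn (Pc a b l0 l1 h0 h1 p q) z = indicator (vt a b l0 l1 h0 h1) z * ennreal (Qf (fst z - p) (snd z - q))"
fun pval :: "pc \<Rightarrow> real" where
  "pval (Pc a b l0 l1 h0 h1 p q) = Vf a b l0 l1 h0 h1 p q"
fun pok :: "pc \<Rightarrow> bool" where
  "pok (Pc a b l0 l1 h0 h1 p q) = (a \<le> b \<and> l0 + l1*a \<le> h0 + h1*a \<and> l0 + l1*b \<le> h0 + h1*b)"
fun ptr :: "real \<Rightarrow> real \<Rightarrow> pc \<Rightarrow> pc" where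
  "ptr t1 t2 (Pc a b l0 l1 h0 h1 p q) = Pc (a+t2) (b+t2) (l0 + t1 - l1*t2) l1 (h0 + t1 - h1*t2) h1 (p+t1) (q+t2)"
fun ppt :: "pc \<Rightarrow> real\<times>real" where
  "ppt (Pc a b l0 l1 h0 h1 p q) = (p,q)"

lemma pint: "pok P \<Longrightarrow> (\<integral>\<^sup>+z. pfn P z \<partial>lborel) = ennreal (pval P)"
  by (cases P) (simp add: vt_int)

lemma pfn_meas[measurable]: "pfn P \<in> borel_measurable borel"
proof (cases P)
  case (Pc a b l0 l1 h0 h1 p q)
  have [measurable]: "(\<lambda>z::real\<times>real. Qf (fst z - p) (snd z - q)) \<in> borel_measurable borel"
    by (rule borel_measurable_continuous_onI) (simp add: Qf_def; intro continuous_intros)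
  have "pfn P = (\<lambda>z. indicator (vt a b l0 l1 h0 h1) z * ennreal (Qf (fst z - p) (snd z - q)))"
    unfolding Pc by (rule ext) simp
  then show ?thesis by simp
qed

lemma pval_nonneg: "pok P \<Longrightarrow> 0 \<le> pval P"
  by (cases P) (simp add: Vf_nonneg)

lemma sum_list_meas[measurable]: "(\<lambda>z. (\<Sum>P\<leftarrow>S. pfn P z)) \<in> borel_measurable borel"
  by (induction S) auto

lemma ptr_val[simp]: "pval (ptr t1 t2 P) = pval P"
  by (cases P) (simp add: Vf_def algebra_simps)

lemma ptr_ok[simp]: "pok (ptr t1 t2 P) = pok P"
  by (cases P) (simp add: algebra_simps)

lemma ptr_set: "z \<in> pset (ptr t1 t2 P) \<longleftrightarrow> (fst z - t1, snd z - t2) \<in> pset P"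
  by (cases P) (auto simp: vt_def algebra_simps)

lemma ptr_pt[simp]: "ppt (ptr t1 t2 P) = (fst (ppt P) + t1, snd (ppt P) + t2)"
  by (cases P) simp

lemma pfn_in: "z \<in> pset P \<Longrightarrow> pfn P z = ennreal (Qf (fst z - fst (ppt P)) (snd z - snd (ppt P)))"
  by (cases P) simp

lemma list_int: "list_all pok S \<Longrightarrow>
   (\<integral>\<^sup>+z. (\<Sum>P\<leftarrow>S. pfn P z) \<partial>lborel) = ennreal (\<Sum>P\<leftarrow>S. pval P)"
proof (induction S)
  case Nil then show ?case by simp
next
  case (Cons P S)
  have "(\<integral>\<^sup>+z. (\<Sum>P\<leftarrow>P#S. pfn P z) \<partial>lborel) = (\<integral>\<^sup>+z. pfn P z \<partial>lborel) + (\<integral>\<^sup>+z. (\<Sum>P\<leftarrow>S. pfn P z) \<partial>lborel)"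
    by (simp add: nn_integral_add)
  also have "\<dots> = ennreal (pval P) + ennreal (\<Sum>P\<leftarrow>S. pval P)"
    using Cons by (simp add: pint)
  also have "\<dots> = ennreal (\<Sum>P\<leftarrow>P#S. pval P)"
  proof -
    have "0 \<le> pval P" using Cons.prems by (simp add: pval_nonneg)
    moreover have "0 \<le> (\<Sum>P\<leftarrow>S. pval P)" using Cons.prems
      by (induction S) (auto intro!: add_nonneg_nonneg pval_nonneg)
    ultimately show ?thesis by (simp add: ennreal_plus)
  qed
  finally show ?case .
qed

definition UPs :: "real \<Rightarrow> pc list" where
  "UPs k = [Pc 0 (1/3) 0 0 (1/2) (-1/2) 0 0,
    Pc (1/3) (1/2) 0 0 1 (-2) 0 0,
    Pc 0 (1/3) (1/2) (-1/2) 1 (-1) 1 0,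
    Pc (1/3) (1/2) 0 1 1 (-1) 1 0,
    Pc (1/3) (1/2) 1 (-2) 0 1 0 1,
    Pc (1/2) 1 0 0 1 (-1) 0 1]"

definition DNs :: "real \<Rightarrow> pc list" where
  "DNs k = [Pc (2/3) 1 1 (-1/2) 1 0 1 1,
    Pc (1/2) (2/3) 2 (-2) 1 0 1 1,
    Pc (2/3) 1 1 (-1) 1 (-1/2) 0 1,
    Pc (1/2) (2/3) 1 (-1) 0 1 0 1,
    Pc (1/2) (2/3) 0 1 2 (-2) 1 0,
    Pc 0 (1/2) 1 (-1) 1 0 1 0]"

definition BOTs :: "real \<Rightarrow> pc list" where
  "BOTs k = [Pc ((-1)*k) 0 0 (-1/2) (1/2) (-1/2) 0 0,
    Pc ((-1)*k) 0 (1/2) (-1/2) 1 (-1/2) 1 0]"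

definition LEFTs :: "real \<Rightarrow> pc list" where
  "LEFTs k = [Pc 0 ((1/2)*k) 0 (-2) 0 0 0 0,
    Pc ((1/2)*k) (1/2) ((-1)*k) 0 0 0 0 0,
    Pc (1/2) ((1/2) + (1/2)*k) ((-1)*k) 0 1 (-2) 0 0,
    Pc (1/2) ((1/2) + (1/2)*k) 1 (-2) 0 0 0 1,
    Pc ((1/2) + (1/2)*k) 1 ((-1)*k) 0 0 0 0 1,
    Pc 1 (1 + (1/2)*k) ((-1)*k) 0 2 (-2) 0 1]"

definition HYPs :: "real \<Rightarrow> pc list" where
  "HYPs k = [Pc (-1) ((-1) + (1/2)*k) 0 (-1) 2 1 1 (-1),
    Pc ((-1) + (1/2)*k) (-1/2) 0 (-1) k (-1) 1 (-1),
    Pc (-1/2) ((-1/2) + (1/2)*k) 1 1 k (-1) 1 (-1),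
    Pc (-1/2) ((-1/2) + (1/2)*k) 0 (-1) 1 1 0 0,
    Pc ((-1/2) + (1/2)*k) 0 0 (-1) k (-1) 0 0,
    Pc 0 ((1/2)*k) 0 1 k (-1) 0 0]"

definition BLs :: "real \<Rightarrow> pc list" where
  "BLs k = [Pc ((-1)*k) 0 ((-1)*k) 0 0 (-1/2) 0 0,
    Pc 0 ((1/2)*k) ((-1)*k) 0 0 (-2) 0 0]"

definition BRs :: "real \<Rightarrow> pc list" where
  "BRs k = [Pc ((-1)*k) 0 0 (-1/2) k (-1) 0 0,
    Pc 0 ((1/2)*k) 0 1 k (-1) 0 0]"

definition TOPs :: "real \<Rightarrow> pc list" where
  "TOPs k = [Pc 0 ((1/2)*k) 0 (-2) 0 1 0 0,
    Pc ((1/2)*k) (2*k) ((-1)*k) 0 k (-1) 0 0]"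


lemma cov_UP: assumes "0 \<le> x" "0 \<le> y" "x + y \<le> 1" shows "\<exists>P\<in>set (UPs k). (x,y) \<in> pset P"
  using assms unfolding UPs_def by (simp add: vt_def) linarith
lemma cov_DN: assumes "x \<le> 1" "y \<le> 1" "1 \<le> x + y" shows "\<exists>P\<in>set (DNs k). (x,y) \<in> pset P"
  using assms unfolding DNs_def by (simp add: vt_def) linarith
lemma cov_BOT: assumes "0 < k" "k < 1" "-k \<le> y" "y \<le> 0" "0 \<le> x + y/2" "x + y/2 \<le> 1"
  shows "\<exists>P\<in>set (BOTs k). (x,y) \<in> pset P"
  using assms unfolding BOTs_def by (simp add: vt_def) linarith
lemma cov_LEFT: assumes "0 < k" "k < 1" "-k \<le> x" "x \<le> 0" "0 \<le> x/2 + y" "x/2 + y \<le> 1"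
  shows "\<exists>P\<in>set (LEFTs k). (x,y) \<in> pset P"
  using assms unfolding LEFTs_def by (simp add: vt_def) linarith
lemma cov_HYP: assumes "0 < k" "k < 1" "0 \<le> x + y" "x + y \<le> k" "-2 \<le> y - x" "y - x \<le> 0"
  shows "\<exists>P\<in>set (HYPs k). (x,y) \<in> pset P"
  using assms unfolding HYPs_def by (simp add: vt_def) linarith
lemma cov_BL: assumes "0 < k" "k < 1" "-k \<le> x" "-k \<le> y" "x + y/2 \<le> 0" "x/2 + y \<le> 0"
  shows "\<exists>P\<in>set (BLs k). (x,y) \<in> pset P"
  using assms unfolding BLs_def by (simp add: vt_def) linarith
lemma cov_BR: assumes "0 < k" "k < 1" "-k \<le> y" "x + y \<le> k" "0 \<le> x + y/2" "y - x \<le> 0"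
  shows "\<exists>P\<in>set (BRs k). (x,y) \<in> pset P"
  using assms unfolding BRs_def by (simp add: vt_def) linarith
lemma cov_TOP: assumes "0 < k" "k < 1" "-k \<le> x" "x + y \<le> k" "0 \<le> x/2 + y" "0 \<le> y - x"
  shows "\<exists>P\<in>set (TOPs k). (x,y) \<in> pset P"
  using assms unfolding TOPs_def by (simp add: vt_def) linarith


lemma ok_all:
  assumes "0 < k" "k < 1"
  shows "list_all pok (UPs k)" "list_all pok (DNs k)" "list_all pok (BOTs k)" "list_all pok (LEFTs k)"
        "list_all pok (HYPs k)" "list_all pok (BLs k)" "list_all pok (BRs k)" "list_all pok (TOPs k)"
  using assms by (simp_all add: UPs_def DNs_def BOTs_def LEFTs_def HYPs_def BLs_def BRs_def TOPs_def)

lemma val_UP: "(\<Sum>P\<leftarrow>UPs k. pval P) = 5/72"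
  by (simp add: UPs_def Vf_def Ef_def power_divide field_simps)
lemma val_DN: "(\<Sum>P\<leftarrow>DNs k. pval P) = 5/72"
  by (simp add: DNs_def Vf_def Ef_def power_divide field_simps)
lemma val_BOT: assumes k2: "k^2 = 7/27" shows "(\<Sum>P\<leftarrow>BOTs k. pval P) = 4*k/27"
  apply (simp add: BOTs_def Vf_def Ef_def power_divide field_simps)
  using k2 by algebra
lemma val_LEFT: assumes k2: "k^2 = 7/27" shows "(\<Sum>P\<leftarrow>LEFTs k. pval P) = 4*k/27"
  apply (simp add: LEFTs_def Vf_def Ef_def power_divide field_simps)
  using k2 by algebra
lemma val_HYP: assumes k2: "k^2 = 7/27" shows "(\<Sum>P\<leftarrow>HYPs k. pval P) = 4*k/27"
  apply (simp add: HYPs_def Vf_def Ef_def power_divide field_simps)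
  using k2 by algebra
lemma val_BL: assumes k2: "k^2 = 7/27" shows "(\<Sum>P\<leftarrow>BLs k. pval P) = 49/648"
  apply (simp add: BLs_def Vf_def Ef_def power_divide field_simps)
  using k2 by algebra
lemma val_BR: assumes k2: "k^2 = 7/27" shows "(\<Sum>P\<leftarrow>BRs k. pval P) = 49/648"
  apply (simp add: BRs_def Vf_def Ef_def power_divide field_simps)
  using k2 by algebra
lemma val_TOP: assumes k2: "k^2 = 7/27" shows "(\<Sum>P\<leftarrow>TOPs k. pval P) = 49/648"
  apply (simp add: TOPs_def Vf_def Ef_def power_divide field_simps)
  using k2 by algebra

definition ptrn :: "nat\<times>nat \<Rightarrow> pc \<Rightarrow> pc" where
  "ptrn t P = ptr (real (fst t)) (real (snd t)) P"

definition UPI :: "nat \<Rightarrow> (nat\<times>nat) set" where "UPI n = {(i,j). i + j < n}"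
definition DNI :: "nat \<Rightarrow> (nat\<times>nat) set" where "DNI n = {(i,j). i + j + 1 < n}"
definition "BOTI n = (\<lambda>i::nat. (i,0::nat)) ` {..<n}"
definition "LEFTI n = (\<lambda>j::nat. (0::nat,j)) ` {..<n}"
definition "HYPI n = (\<lambda>i::nat. (i,n-i)) ` {..<n}"

definition "Tp n k = {z::real\<times>real. -k \<le> fst z \<and> -k \<le> snd z \<and> fst z + snd z \<le> real n + k}"

definition "inF I S z = (\<exists>t\<in>I. \<exists>P\<in>set S. z \<in> pset (ptrn t P))"

lemma inF_I: "t \<in> I \<Longrightarrow> \<exists>P\<in>set S. (fst z - real (fst t), snd z - real (snd t)) \<in> pset P \<Longrightarrow> inF I S z"
  unfolding inF_def ptrn_def by (auto simp: ptr_set)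

lemma covering:
  assumes k: "0 < k" "k < 1" and n: "2 \<le> n" and z: "z \<in> Tp n k"
  shows "inF (UPI n) (UPs k) z \<or> inF (DNI n) (DNs k) z \<or> inF (BOTI n) (BOTs k) z \<or>
         inF (LEFTI n) (LEFTs k) z \<or> inF (HYPI n) (HYPs k) z \<or> inF {(0,0)} (BLs k) z \<or>
         inF {(n,0)} (BRs k) z \<or> inF {(0,n)} (TOPs k) z"
proof -
  obtain x y where zxy: "z = (x,y)" by (cases z)
  have T: "-k \<le> x" "-k \<le> y" "x + y \<le> real n + k" using z by (auto simp: Tp_def zxy)
  consider (A) "0 \<le> x" "0 \<le> y" "x + y \<le> n" | (B) "y < 0" | (C) "0 \<le> y" "x < 0" | (D) "0 \<le> x" "0 \<le> y" "x + y > n"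
    by linarith
  then show ?thesis
  proof cases
    case A
    define i where "i = nat \<lfloor>x\<rfloor>"
    define j where "j = nat \<lfloor>y\<rfloor>"
    have ix: "real i \<le> x" "x < real i + 1" using A unfolding i_def by linarith+
    have jy: "real j \<le> y" "y < real j + 1" using A unfolding j_def by linarith+
    have ijn: "i + j \<le> n"
    proof -
      have "real (i + j) \<le> real n" using ix jy A by simp
      then show ?thesis by linarith
    qed
    consider (A1) "x - i + (y - j) \<le> 1" "i + j < n" | (A2) "x - i + (y - j) > 1" | (A3) "x - i + (y - j) \<le> 1" "i + j = n"
      using ijn by linarith
    then show ?thesis
    proof cases
      case A1
      have "inF (UPI n) (UPs k) z"
        by (rule inF_I[of "(i,j)"]) (use A1 ix jy in \<open>auto simp: UPI_def zxy intro!: cov_UP\<close>)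
      then show ?thesis by blast
    next
      case A2
      have "real (i + j + 1) < real n" using A2 A by simp
      then have "i + j + 1 < n" by linarith
      then have "inF (DNI n) (DNs k) z"
        by (intro inF_I[of "(i,j)"]) (use A2 ix jy in \<open>auto simp: DNI_def zxy intro!: cov_DN\<close>)
      then show ?thesis by blast
    next
      case A3
      have xi: "x = real i" and yj: "y = real j" using A3 ix jy A by auto
      show ?thesis
      proof (cases "i \<ge> 1")
        case True
        have "inF (UPI n) (UPs k) z"
          by (rule inF_I[of "(i-1,j)"]) (use A3 True xi yj in \<open>auto simp: UPI_def zxy of_nat_diff intro!: cov_UP\<close>)
        then show ?thesis by blast
      next
        case False
        then have "j \<ge> 1" using A3 n by auto
        have "inF (UPI n) (UPs k) z"
          by (rule inF_I[of "(i,j-1)"]) (use A3 False \<open>j \<ge> 1\<close> xi yj in \<open>auto simp: UPI_def zxy of_nat_diff intro!: cov_UP\<close>)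
        then show ?thesis by blast
      qed
    qed
  next
    case B
    consider (B1) "x + y/2 \<le> 0" | (B2) "x + y/2 \<ge> n" | (B3) "0 < x + y/2" "x + y/2 < n" by linarith
    then show ?thesis
    proof cases
      case B1
      have "inF {(0,0)} (BLs k) z"
        by (rule inF_I[of "(0,0)"]) (use B1 B T k in \<open>auto simp: zxy intro!: cov_BL\<close>)
      then show ?thesis by blast
    next
      case B2
      have "inF {(n,0)} (BRs k) z"
        by (rule inF_I[of "(n,0)"]) (use B2 B T k in \<open>auto simp: zxy intro!: cov_BR\<close>)
      then show ?thesis by blast
    next
      case B3
      define i where "i = nat \<lfloor>x + y/2\<rfloor>"
      have ix: "real i \<le> x + y/2" "x + y/2 < real i + 1" using B3 unfolding i_def by linarith+
      have "i < n" using ix B3 by linarith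
      have "inF (BOTI n) (BOTs k) z"
        by (rule inF_I[of "(i,0)"]) (use B3 B T k ix \<open>i < n\<close> in \<open>auto simp: zxy BOTI_def intro!: cov_BOT\<close>)
      then show ?thesis by blast
    qed
  next
    case C
    consider (C1) "x/2 + y \<le> 0" | (C2) "x/2 + y \<ge> n" | (C3) "0 < x/2 + y" "x/2 + y < n" by linarith
    then show ?thesis
    proof cases
      case C1
      have "inF {(0,0)} (BLs k) z"
        by (rule inF_I[of "(0,0)"]) (use C1 C T k in \<open>auto simp: zxy intro!: cov_BL\<close>)
      then show ?thesis by blast
    next
      case C2
      have "inF {(0,n)} (TOPs k) z"
        by (rule inF_I[of "(0,n)"]) (use C2 C T k in \<open>auto simp: zxy intro!: cov_TOP\<close>)
      then show ?thesis by blast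
    next
      case C3
      define j where "j = nat \<lfloor>x/2 + y\<rfloor>"
      have jy: "real j \<le> x/2 + y" "x/2 + y < real j + 1" using C3 unfolding j_def by linarith+
      have "j < n" using jy C3 by linarith
      have "inF (LEFTI n) (LEFTs k) z"
        by (rule inF_I[of "(0,j)"]) (use C3 C T k jy \<open>j < n\<close> in \<open>auto simp: zxy LEFTI_def intro!: cov_LEFT\<close>)
      then show ?thesis by blast
    qed
  next
    case D
    consider (D1) "y - x \<le> - real n" | (D2) "y - x \<ge> n" | (D3) "- real n < y - x" "y - x < n" by linarith
    then show ?thesis
    proof cases
      case D1
      have "inF {(n,0)} (BRs k) z"
        by (rule inF_I[of "(n,0)"]) (use D1 D T k in \<open>auto simp: zxy intro!: cov_BR\<close>)
      then show ?thesis by blast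
    next
      case D2
      have "inF {(0,n)} (TOPs k) z"
        by (rule inF_I[of "(0,n)"]) (use D2 D T k in \<open>auto simp: zxy intro!: cov_TOP\<close>)
      then show ?thesis by blast
    next
      case D3
      define w where "w = (real n - (y - x))/2"
      define i where "i = nat \<lfloor>w\<rfloor>"
      have w: "0 < w" "w < n" using D3 by (auto simp: w_def)
      have iw: "real i \<le> w" "w < real i + 1" using w unfolding i_def by linarith+
      have "i < n" using iw w by linarith
      then have ni: "real (n - i) = real n - real i" by (simp add: of_nat_diff)
      have "inF (HYPI n) (HYPs k) z"
        by (rule inF_I[of "(i,n-i)"]) (use D3 D T k iw \<open>i < n\<close> in \<open>auto simp: zxy HYPI_def ni w_def intro!: cov_HYP\<close>)
      then show ?thesis by blast
    qed
  qed
qed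


definition fam :: "(nat\<times>nat) set \<Rightarrow> pc list \<Rightarrow> real\<times>real \<Rightarrow> ennreal" where
  "fam I S z = (\<Sum>t\<in>I. \<Sum>P\<leftarrow>S. pfn (ptrn t P) z)"

lemma sum_list_pfn_map: "(\<Sum>P\<leftarrow>S. pfn (ptrn t P) z) = (\<Sum>P\<leftarrow>map (ptrn t) S. pfn P z)"
  by (simp add: comp_def)

lemma fam_meas[measurable]: "fam I S \<in> borel_measurable borel"
  unfolding fam_def sum_list_pfn_map by measurable

lemma list_ok_map: "list_all pok S \<Longrightarrow> list_all pok (map (ptrn t) S)"
  by (induction S) (auto simp: ptrn_def)

lemma list_val_map: "(\<Sum>P\<leftarrow>map (ptrn t) S. pval P) = (\<Sum>P\<leftarrow>S. pval P)"
  by (induction S) (auto simp: ptrn_def)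

lemma fam_int:
  assumes "finite I" "list_all pok S"
  shows "(\<integral>\<^sup>+z. fam I S z \<partial>lborel) = of_nat (card I) * ennreal (\<Sum>P\<leftarrow>S. pval P)"
proof -
  have "(\<integral>\<^sup>+z. fam I S z \<partial>lborel) = (\<Sum>t\<in>I. \<integral>\<^sup>+z. (\<Sum>P\<leftarrow>map (ptrn t) S. pfn P z) \<partial>lborel)"
    unfolding fam_def sum_list_pfn_map by (rule nn_integral_sum) measurable
  also have "\<dots> = (\<Sum>t\<in>I. ennreal (\<Sum>P\<leftarrow>S. pval P))"
  proof (intro sum.cong refl)
    fix t
    show "(\<integral>\<^sup>+z. (\<Sum>P\<leftarrow>map (ptrn t) S. pfn P z) \<partial>lborel) = ennreal (\<Sum>P\<leftarrow>S. pval P)"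
      by (rule trans[OF list_int[OF list_ok_map[OF assms(2)]] arg_cong[where f=ennreal, OF list_val_map]])
  qed
  finally show ?thesis by simp
qed

lemma le_sum_list_ennreal: "P \<in> set S \<Longrightarrow> f P \<le> (\<Sum>Q\<leftarrow>S. f Q :: ennreal)"
  by (induction S) (auto intro: add_increasing add_increasing2)

lemma fam_le:
  assumes "finite I" "t \<in> I" "P \<in> set S"
  shows "pfn (ptrn t P) z \<le> fam I S z"
proof -
  have "pfn (ptrn t P) z \<le> (\<Sum>P\<leftarrow>S. pfn (ptrn t P) z)"
    using le_sum_list_ennreal[OF assms(3), of "\<lambda>P. pfn (ptrn t P) z"] .
  also have "\<dots> \<le> fam I S z"
    unfolding fam_def by (rule member_le_sum) (use assms in auto)
  finally show ?thesis .
qed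

definition latp :: "nat \<Rightarrow> pc \<Rightarrow> bool" where
  "latp n P = (\<exists>i j. i + j \<le> n \<and> ppt P = (real i, real j))"

lemma inF_bound:
  assumes "inF I S z" "finite I" "\<And>t P. t \<in> I \<Longrightarrow> P \<in> set S \<Longrightarrow> latp n (ptrn t P)"
  shows "\<exists>i j. i + j \<le> n \<and> ennreal (Qf (fst z - real i) (snd z - real j)) \<le> fam I S z"
proof -
  obtain t P where tP: "t \<in> I" "P \<in> set S" "z \<in> pset (ptrn t P)" using assms(1) unfolding inF_def by blast
  obtain i j where ij: "i + j \<le> n" "ppt (ptrn t P) = (real i, real j)" using assms(3)[OF tP(1,2)] unfolding latp_def by blast
  have "ennreal (Qf (fst z - real i) (snd z - real j)) = pfn (ptrn t P) z"
    using pfn_in[OF tP(3)] ij by simp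
  also have "\<dots> \<le> fam I S z" by (rule fam_le) (use tP assms in auto)
  finally show ?thesis using ij by blast
qed

lemma pts_UP: "P \<in> set (UPs k) \<Longrightarrow> ppt P = (0,0) \<or> ppt P = (1,0) \<or> ppt P = (0,1)"
  by (auto simp: UPs_def)
lemma pts_DN: "P \<in> set (DNs k) \<Longrightarrow> ppt P = (1,1) \<or> ppt P = (1,0) \<or> ppt P = (0,1)"
  by (auto simp: DNs_def)
lemma pts_BOT: "P \<in> set (BOTs k) \<Longrightarrow> ppt P = (0,0) \<or> ppt P = (1,0)"
  by (auto simp: BOTs_def)
lemma pts_LEFT: "P \<in> set (LEFTs k) \<Longrightarrow> ppt P = (0,0) \<or> ppt P = (0,1)"
  by (auto simp: LEFTs_def)
lemma pts_HYP: "P \<in> set (HYPs k) \<Longrightarrow> ppt P = (0,0) \<or> ppt P = (1,-1)"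
  by (auto simp: HYPs_def)
lemma pts_BL: "P \<in> set (BLs k) \<Longrightarrow> ppt P = (0,0)"
  by (auto simp: BLs_def)
lemma pts_BR: "P \<in> set (BRs k) \<Longrightarrow> ppt P = (0,0)"
  by (auto simp: BRs_def)
lemma pts_TOP: "P \<in> set (TOPs k) \<Longrightarrow> ppt P = (0,0)"
  by (auto simp: TOPs_def)

lemma lat_UP: "t \<in> UPI n \<Longrightarrow> P \<in> set (UPs k) \<Longrightarrow> latp n (ptrn t P)"
proof -
  assume t: "t \<in> UPI n" and P: "P \<in> set (UPs k)"
  obtain i j where ij: "t = (i,j)" "i + j < n" using t by (auto simp: UPI_def)
  from pts_UP[OF P] show ?thesis unfolding latp_def ptrn_def
  proof (elim disjE)
    assume "ppt P = (0,0)" then show "\<exists>i' j'. i' + j' \<le> n \<and> ppt (ptr (real (fst t)) (real (snd t)) P) = (real i', real j')"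
      using ij by (intro exI[of _ i] exI[of _ j]) auto
  next
    assume "ppt P = (1,0)" then show "\<exists>i' j'. i' + j' \<le> n \<and> ppt (ptr (real (fst t)) (real (snd t)) P) = (real i', real j')"
      using ij by (intro exI[of _ "i+1"] exI[of _ j]) auto
  next
    assume "ppt P = (0,1)" then show "\<exists>i' j'. i' + j' \<le> n \<and> ppt (ptr (real (fst t)) (real (snd t)) P) = (real i', real j')"
      using ij by (intro exI[of _ i] exI[of _ "j+1"]) auto
  qed
qed

lemma latpI: "ppt P = (u,v) \<Longrightarrow> real (fst t) + u = real i \<Longrightarrow> real (snd t) + v = real j \<Longrightarrow> i + j \<le> n \<Longrightarrow> latp n (ptrn t P)"
  unfolding latp_def ptrn_def by (cases P) (auto simp: add.commute)

lemma lat_DN: "t \<in> DNI n \<Longrightarrow> P \<in> set (DNs k) \<Longrightarrow> latp n (ptrn t P)"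
proof -
  assume t: "t \<in> DNI n" and P: "P \<in> set (DNs k)"
  obtain i j where ij: "t = (i,j)" "i + j + 1 < n" using t by (auto simp: DNI_def)
  from pts_DN[OF P] show ?thesis
  proof (elim disjE)
    assume "ppt P = (1,1)" then show ?thesis by (rule latpI[where i="i+1" and j="j+1"]) (use ij in auto)
  next
    assume "ppt P = (1,0)" then show ?thesis by (rule latpI[where i="i+1" and j="j"]) (use ij in auto)
  next
    assume "ppt P = (0,1)" then show ?thesis by (rule latpI[where i="i" and j="j+1"]) (use ij in auto)
  qed
qed

lemma lat_BOT: "t \<in> BOTI n \<Longrightarrow> P \<in> set (BOTs k) \<Longrightarrow> latp n (ptrn t P)"
proof -
  assume t: "t \<in> BOTI n" and P: "P \<in> set (BOTs k)"
  obtain i where ij: "t = (i,0)" "i < n" using t by (auto simp: BOTI_def)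
  from pts_BOT[OF P] show ?thesis
  proof (elim disjE)
    assume "ppt P = (0,0)" then show ?thesis by (rule latpI[where i="i" and j="0"]) (use ij in auto)
  next
    assume "ppt P = (1,0)" then show ?thesis by (rule latpI[where i="i+1" and j="0"]) (use ij in auto)
  qed
qed

lemma lat_LEFT: "t \<in> LEFTI n \<Longrightarrow> P \<in> set (LEFTs k) \<Longrightarrow> latp n (ptrn t P)"
proof -
  assume t: "t \<in> LEFTI n" and P: "P \<in> set (LEFTs k)"
  obtain j where ij: "t = (0,j)" "j < n" using t by (auto simp: LEFTI_def)
  from pts_LEFT[OF P] show ?thesis
  proof (elim disjE)
    assume "ppt P = (0,0)" then show ?thesis by (rule latpI[where i="0" and j="j"]) (use ij in auto)
  next
    assume "ppt P = (0,1)" then show ?thesis by (rule latpI[where i="0" and j="j+1"]) (use ij in auto)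
  qed
qed

lemma lat_HYP: "t \<in> HYPI n \<Longrightarrow> P \<in> set (HYPs k) \<Longrightarrow> latp n (ptrn t P)"
proof -
  assume t: "t \<in> HYPI n" and P: "P \<in> set (HYPs k)"
  obtain i where ij: "t = (i,n-i)" "i < n" using t by (auto simp: HYPI_def)
  then have ni: "real (n - i) = real n - real i" "real (n - i - 1) = real n - real i - 1" by (simp_all add: of_nat_diff)
  from pts_HYP[OF P] show ?thesis
  proof (elim disjE)
    assume "ppt P = (0,0)" then show ?thesis by (rule latpI[where i="i" and j="n-i"]) (use ij in auto)
  next
    assume "ppt P = (1,-1)" then show ?thesis by (rule latpI[where i="i+1" and j="n-i-1"]) (use ij ni in auto)
  qed
qed

lemma lat_BL: "t \<in> {(0,0)} \<Longrightarrow> P \<in> set (BLs k) \<Longrightarrow> latp n (ptrn t P)"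
  by (rule latpI[where i=0 and j=0, OF pts_BL]) auto
lemma lat_BR: "t \<in> {(n,0)} \<Longrightarrow> P \<in> set (BRs k) \<Longrightarrow> latp n (ptrn t P)"
  by (rule latpI[where i=n and j=0, OF pts_BR]) auto
lemma lat_TOP: "t \<in> {(0,n)} \<Longrightarrow> P \<in> set (TOPs k) \<Longrightarrow> latp n (ptrn t P)"
  by (rule latpI[where i=0 and j=n, OF pts_TOP]) auto

lemma fin_I: "finite (UPI n)" "finite (DNI n)" "finite (BOTI n)" "finite (LEFTI n)" "finite (HYPI n)"
proof -
  have "UPI n \<subseteq> {..<n} \<times> {..<n}" by (auto simp: UPI_def)
  then show "finite (UPI n)" by (rule finite_subset) auto
  have "DNI n \<subseteq> {..<n} \<times> {..<n}" by (auto simp: DNI_def)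
  then show "finite (DNI n)" by (rule finite_subset) auto
qed (simp_all add: BOTI_def LEFTI_def HYPI_def)

definition Hb :: "nat \<Rightarrow> real \<Rightarrow> real\<times>real \<Rightarrow> ennreal" where
  "Hb n k z = fam (UPI n) (UPs k) z + fam (DNI n) (DNs k) z + fam (BOTI n) (BOTs k) z +
         fam (LEFTI n) (LEFTs k) z + fam (HYPI n) (HYPs k) z + fam {(0,0)} (BLs k) z +
         fam {(n,0)} (BRs k) z + fam {(0,n)} (TOPs k) z"

lemma Hb_meas[measurable]: "Hb n k \<in> borel_measurable borel"
  unfolding Hb_def by measurable

lemma Hb_bound:
  assumes k: "0 < k" "k < 1" and n: "2 \<le> n" and z: "z \<in> Tp n k"
  shows "\<exists>i j. i + j \<le> n \<and> ennreal (Qf (fst z - real i) (snd z - real j)) \<le> Hb n k z"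
proof -
  have le: "fam (UPI n) (UPs k) z \<le> Hb n k z" "fam (DNI n) (DNs k) z \<le> Hb n k z" "fam (BOTI n) (BOTs k) z \<le> Hb n k z"
     "fam (LEFTI n) (LEFTs k) z \<le> Hb n k z" "fam (HYPI n) (HYPs k) z \<le> Hb n k z" "fam {(0,0)} (BLs k) z \<le> Hb n k z"
     "fam {(n,0)} (BRs k) z \<le> Hb n k z" "fam {(0,n)} (TOPs k) z \<le> Hb n k z"
    unfolding Hb_def by (simp_all add: add_increasing add_increasing2 add.assoc)
  from covering[OF assms] show ?thesis
  proof (elim disjE)
    assume "inF (UPI n) (UPs k) z" from inF_bound[OF this fin_I(1) lat_UP] le(1) show ?thesis by (meson order_trans)
  next
    assume "inF (DNI n) (DNs k) z" from inF_bound[OF this fin_I(2) lat_DN] le(2) show ?thesis by (meson order_trans)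
  next
    assume "inF (BOTI n) (BOTs k) z" from inF_bound[OF this fin_I(3) lat_BOT] le(3) show ?thesis by (meson order_trans)
  next
    assume "inF (LEFTI n) (LEFTs k) z" from inF_bound[OF this fin_I(4) lat_LEFT] le(4) show ?thesis by (meson order_trans)
  next
    assume "inF (HYPI n) (HYPs k) z" from inF_bound[OF this fin_I(5) lat_HYP] le(5) show ?thesis by (meson order_trans)
  next
    assume "inF {(0,0)} (BLs k) z" from inF_bound[OF this _ lat_BL] le(6) show ?thesis by (meson order_trans finite.intros)
  next
    assume "inF {(n,0)} (BRs k) z" from inF_bound[OF this _ lat_BR] le(7) show ?thesis by (meson order_trans finite.intros)
  next
    assume "inF {(0,n)} (TOPs k) z" from inF_bound[OF this _ lat_TOP] le(8) show ?thesis by (meson order_trans finite.intros)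
  qed
qed


lemma card_UPI: "2 * card (UPI n) = n * (n + 1)"
proof (induction n)
  case 0 then show ?case by (simp add: UPI_def)
next
  case (Suc n)
  have eq: "UPI (Suc n) = UPI n \<union> (\<lambda>i. (i, n - i)) ` {..n}"
    by (auto simp: UPI_def image_iff)
  have disj: "UPI n \<inter> (\<lambda>i. (i, n - i)) ` {..n} = {}" by (auto simp: UPI_def)
  have inj: "inj_on (\<lambda>i. (i, n - i)) {..n}" by (auto intro: inj_onI)
  have "card (UPI (Suc n)) = card (UPI n) + (n + 1)"
    unfolding eq using disj fin_I(1)[of n] inj by (simp add: card_Un_disjoint card_image)
  then show ?case using Suc by simp
qed

lemma DNI_UPI: "DNI n = UPI (n - 1)"
  by (auto simp: DNI_def UPI_def)

lemma card_lines: "card (BOTI n) = n" "card (LEFTI n) = n" "card (HYPI n) = n"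
  unfolding BOTI_def LEFTI_def HYPI_def
  by (auto simp: card_image inj_on_def)

lemma int_Hb:
  assumes k: "0 < k" "k < 1" "k^2 = 7/27" and n: "1 \<le> n"
  shows "(\<integral>\<^sup>+z. Hb n k z \<partial>lborel) = ennreal (5 * (real n)^2 / 72 + 4*k*real n/9 + 49/216)"
proof -
  note ok = ok_all[OF k(1,2)]
  have "(\<integral>\<^sup>+z. Hb n k z \<partial>lborel) =
     of_nat (card (UPI n)) * ennreal (5/72) + of_nat (card (DNI n)) * ennreal (5/72) +
     of_nat n * ennreal (4*k/27) + of_nat n * ennreal (4*k/27) + of_nat n * ennreal (4*k/27) +
     ennreal (49/648) + ennreal (49/648) + ennreal (49/648)"
    unfolding Hb_def
    by (simp add: nn_integral_add fam_int fin_I ok val_UP val_DN val_BOT[OF k(3)] val_LEFT[OF k(3)]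
        val_HYP[OF k(3)] val_BL[OF k(3)] val_BR[OF k(3)] val_TOP[OF k(3)] card_lines)
  also have "\<dots> = ennreal (real (card (UPI n)) * (5/72) + real (card (DNI n)) * (5/72) + 3 * (real n * (4*k/27)) + 3 * (49/648))"
    using k by (simp add: ennreal_of_nat_eq_real_of_nat ennreal_mult'[symmetric] ennreal_plus[symmetric] del: ennreal_plus)
  also have "real (card (UPI n)) * (5/72) + real (card (DNI n)) * (5/72) + 3 * (real n * (4*k/27)) + 3 * (49/648)
      = 5 * (real n)^2 / 72 + 4*k*real n/9 + 49/216"
  proof -
    have a: "2 * real (card (UPI n)) = real n * (real n + 1)"
    proof -
      have "real (2 * card (UPI n)) = real (n * (n + 1))" using card_UPI[of n] by (rule arg_cong)
      then show ?thesis by (simp add: algebra_simps)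
    qed
    have b: "2 * real (card (DNI n)) = (real n - 1) * real n"
    proof -
      have "real (2 * card (UPI (n-1))) = real ((n-1) * (n - 1 + 1))" using card_UPI[of "n-1"] by (rule arg_cong)
      then show ?thesis using n unfolding DNI_UPI by (simp add: of_nat_diff)
    qed
    show ?thesis using a b by (simp add: field_simps power2_eq_square) 
  qed
  finally show ?thesis .
qed


lemma phi2_diff: "phi2 a - phi2 b = phi2 (fst a - fst b, snd a - snd b)"
  by (simp add: phi2_def algebra_simps)

lemma norm_phi2: "(norm (phi2 (a,b)))\<^sup>2 = a\<^sup>2 + b\<^sup>2"
proof -
  have "(norm (phi2 (a,b)))\<^sup>2 = phi2 (a,b) \<bullet> phi2 (a,b)" by (simp add: power2_norm_eq_inner)
  also have "\<dots> = phi2 (a,b) $ 1 * phi2 (a,b) $ 1 + phi2 (a,b) $ 2 * phi2 (a,b) $ 2"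
    unfolding inner_vec_def sum_2 by simp
  also have "\<dots> = a\<^sup>2 + b\<^sup>2"
    by (simp only: phi2_nth fst_conv snd_conv power2_eq_square)
  finally show ?thesis .
qed

lemma norm_psi:
  "(norm (psi o1 o2 s z - psi o1 o2 s w))\<^sup>2 = s\<^sup>2 * ((fst z - fst w)\<^sup>2 + (fst z - fst w)*(snd z - snd w) + (snd z - snd w)\<^sup>2)"
proof -
  have "psi o1 o2 s z - psi o1 o2 s w = phi2 (s*((fst z - fst w) + (snd z - snd w)/2), s*(sqrt 3/2) * (snd z - snd w))"
    unfolding psi_def phi2_diff by (rule arg_cong[where f=phi2]) (simp add: field_simps)
  then have "(norm (psi o1 o2 s z - psi o1 o2 s w))\<^sup>2 = (s*((fst z - fst w) + (snd z - snd w)/2))\<^sup>2 + (s*(sqrt 3/2) * (snd z - snd w))\<^sup>2"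
    by (simp add: norm_phi2)
  also have "\<dots> = s\<^sup>2 * ((fst z - fst w)\<^sup>2 + (fst z - fst w)*(snd z - snd w) + (snd z - snd w)\<^sup>2)"
  proof -
    have h: "(s*(sqrt 3/2) * (snd z - snd w))\<^sup>2 = s\<^sup>2 * (3/4) * (snd z - snd w)\<^sup>2"
      by (simp add: power_mult_distrib power_divide)
    show ?thesis unfolding h by (simp add: field_simps) algebra
  qed
  finally show ?thesis .
qed

lemma psi_T:
  assumes s: "0 < s" and k: "0 < k" and sn: "s * (real n + 3*k) = 1"
    and T: "psi (3*k* s/2) (k * s * sqrt 3/2) s z \<in> eq_triangle"
  shows "-k \<le> fst z \<and> -k \<le> snd z \<and> fst z + snd z \<le> real n + k"
proof -
  obtain u v w where uvw: "0 \<le> u" "0 \<le> v" "0 \<le> w" "u + v + w = 1"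
    and eq: "psi (3*k* s/2) (k * s * sqrt 3/2) s z = u *\<^sub>R vector [0,0] + v *\<^sub>R vector [1,0] + w *\<^sub>R vector [1/2, sqrt 3/2]"
    using T unfolding eq_triangle_def convex_hull_3 by blast
  have e1: "3*k* s/2 + s*(fst z + snd z/2) = v + w/2"
    using arg_cong[OF eq, of "\<lambda>x. x$1"] by (simp add: psi_def)
  have e2: "k * s * sqrt 3/2 + s*(sqrt 3/2) * snd z = w * (sqrt 3/2)"
    using arg_cong[OF eq, of "\<lambda>x. x$2"] by (simp add: psi_def)
  have w: "w = s * (k + snd z)"
  proof -
    have "(sqrt 3/2) * (s * (k + snd z)) = (sqrt 3/2) * w" using e2 by (simp add: algebra_simps)
    then show ?thesis by simp
  qed
  have "v = 3*k* s/2 + s*(fst z + snd z/2) - w/2" using e1 by linarith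
  then have v: "v = s * (k + fst z)" by (simp add: w field_simps)
  have "-k \<le> fst z" using v uvw s by (simp add: zero_le_mult_iff)
  moreover have "-k \<le> snd z" using w uvw s by (simp add: zero_le_mult_iff)
  moreover have "fst z + snd z \<le> real n + k"
  proof -
    have "s * (2*k + fst z + snd z) \<le> 1" using v w uvw by (simp add: algebra_simps)
    also have "\<dots> = s * (real n + 3*k)" using sn by simp
    finally show ?thesis using s by simp
  qed
  ultimately show ?thesis by blast
qed

lemma num_ineq:
  fixes x k :: real
  assumes k2: "k^2 = 7/27" and k0: "0 < k" and x: "2 \<le> x"
  shows "2 * (1/(x + 3*k))^4 * (5 * x^2 / 72 + 4*k*x/9 + 49/216)
     \<le> (45 * (x+1) ^ 3 - 28 * (9*k) * (x+1) ^ 2 + (301 - 28 * (9*k)) * (x+1) - 98) / (324 * (x+1) ^ 3 * x\<^sup>2)"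
proof -
  have kl: "0.46 < k"
  proof (rule ccontr)
    assume "\<not> 0.46 < k" then have "k \<le> 0.46" by simp
    then have "k^2 \<le> 0.46^2" using k0 by (intro power_mono) auto
    then show False using k2 by (simp add: power_divide)
  qed
  have ku: "k < 0.6"
  proof (rule ccontr)
    assume "\<not> k < 0.6" then have "0.6 \<le> k" by simp
    then have "0.6^2 \<le> k^2" by (intro power_mono) auto
    then show False using k2 by (simp add: power_divide)
  qed
  define d0 where "d0 = 12152/9 - 2744*k"
  define d1 where "d1 = -11564/9 + 2828*k"
  define d2 where "d2 = -1428 + 3780*k"
  define d3 where "d3 = 7532/3 - 4116*k"
  define d4 where "d4 = -700 + 1596*k"
  let ?a = "5 * x^2 / 72 + 4*k*x/9 + 49/216"
  let ?c = "(45 * (x+1) ^ 3 - 28 * (9*k) * (x+1) ^ 2 + (301 - 28 * (9*k)) * (x+1) - 98)"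
  have iden: "?c * (x + 3*k)^4 - 2 * ?a * (324 * (x+1) ^ 3 * x\<^sup>2) = d0 + d1*x + d2*x^2 + d3*x^3 + d4*x^4"
    unfolding d0_def d1_def d2_def d3_def d4_def using k2 by algebra
  have pos: "0 \<le> d0 + d1*x + d2*x^2 + d3*x^3 + d4*x^4"
  proof -
    have "d1 * 2 \<le> d1 * x" using x kl by (intro mult_left_mono) (auto simp: d1_def)
    moreover have "0 \<le> d0 + 2*d1" using kl by (simp add: d0_def d1_def)
    moreover have "0 \<le> d2*x^2" "0 \<le> d3*x^3" "0 \<le> d4*x^4" using kl ku x by (simp_all add: d2_def d3_def d4_def)
    ultimately show ?thesis by linarith
  qed
  have xp: "0 < x + 3*k" "0 < 324 * (x+1) ^ 3 * x\<^sup>2" using x k0 by auto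
  have "2 * ?a * (324 * (x+1) ^ 3 * x\<^sup>2) \<le> ?c * (x + 3*k)^4" using iden pos by linarith
  then show ?thesis using xp by (simp add: field_simps power_one_over)
qed

lemma eq_triangle_borel[measurable]: "eq_triangle \<in> sets borel"
proof -
  have "compact eq_triangle" unfolding eq_triangle_def by (intro finite_imp_compact_convex_hull) auto
  then show ?thesis by (intro borel_closed compact_imp_closed)
qed

theorem part1:
  fixes N :: nat assumes N3: "N \<ge> 3"
  shows "quant_err unif_triangle (N * (N + 1) div 2) \<le> tri_bound N"
proof -
  define n where "n = N - 1"
  have n2: "2 \<le> n" using N3 by (simp add: n_def)
  have rN: "real N = real n + 1" using N3 by (simp add: n_def of_nat_diff)
  define k where "k = sqrt 21 / 9"
  have k2: "k^2 = 7/27" by (simp add: k_def power_divide)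
  have k0: "0 < k" by (simp add: k_def)
  have k1: "k < 1"
  proof (rule ccontr)
    assume "\<not> k < 1" then have "1 \<le> k" by simp
    then have "1^2 \<le> k^2" by (intro power_mono) auto
    then show False using k2 by simp
  qed
  define s where "s = 1 / (real n + 3*k)"
  have s0: "0 < s" using k0 by (simp add: s_def)
  have sn: "s * (real n + 3*k) = 1" using k0 by (simp add: s_def)
  define o1 where "o1 = 3*k* s/2"
  define o2 where "o2 = k * s * sqrt 3/2"
  define L where "L = UPI N"
  define \<alpha> where "\<alpha> = (\<lambda>t. psi o1 o2 s (real (fst t), real (snd t))) ` L"
  have finL: "finite L" by (simp add: L_def fin_I)
  have fin: "finite \<alpha>" using finL by (simp add: \<alpha>_def)
  have "(0,0) \<in> L" using N3 by (simp add: L_def UPI_def)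
  then have "L \<noteq> {}" by blast
  then have ne: "\<alpha> \<noteq> {}" by (simp add: \<alpha>_def)
  have cardL: "card L = N * (N + 1) div 2" using card_UPI[of N] by (simp add: L_def)
  have card: "card \<alpha> \<le> N * (N + 1) div 2" unfolding \<alpha>_def using card_image_le[OF finL] cardL by simp
  define m where "m = (\<lambda>x. Min ((\<lambda>a. (norm (x - a))\<^sup>2) ` \<alpha>))"
  have m_meas: "m \<in> borel_measurable borel"
    unfolding m_def using fin by measurable
  have m_nonneg: "0 \<le> m x" for x
    unfolding m_def using fin ne by (intro Min.boundedI) auto
  define total where "total = 5 * (real n)^2 / 72 + 4*k*real n/9 + 49/216"
  define G where "G = (\<lambda>x. ennreal (indicator eq_triangle x * (4 / sqrt 3)) * ennreal (m x))"
  have G_meas: "G \<in> borel_measurable borel" unfolding G_def using m_meas by measurable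
  have pw: "G (psi o1 o2 s z) \<le> ennreal (4 / sqrt 3 * s\<^sup>2) * Hb n k z" for z
  proof (cases "psi o1 o2 s z \<in> eq_triangle")
    case False then show ?thesis by (simp add: G_def)
  next
    case True
    have "z \<in> Tp n k" using psi_T[OF s0 k0 sn, of z] True by (simp add: Tp_def o1_def o2_def)
    from Hb_bound[OF k0 k1 n2 this] obtain i j where ij: "i + j \<le> n"
      and hb: "ennreal (Qf (fst z - real i) (snd z - real j)) \<le> Hb n k z" by blast
    have aL: "(i,j) \<in> L" using ij N3 by (auto simp: L_def UPI_def n_def)
    define a where "a = psi o1 o2 s (real i, real j)"
    have a\<alpha>: "a \<in> \<alpha>" using aL by (force simp: \<alpha>_def a_def)
    have "m (psi o1 o2 s z) \<le> (norm (psi o1 o2 s z - a))\<^sup>2"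
      unfolding m_def using fin a\<alpha> by (intro Min_le) auto
    also have "\<dots> = s\<^sup>2 * Qf (fst z - real i) (snd z - real j)"
      unfolding a_def norm_psi Qf_def by simp
    finally have mle: "m (psi o1 o2 s z) \<le> s\<^sup>2 * Qf (fst z - real i) (snd z - real j)" .
    have "G (psi o1 o2 s z) = ennreal (4 / sqrt 3) * ennreal (m (psi o1 o2 s z))"
      using True by (simp add: G_def)
    also have "\<dots> \<le> ennreal (4 / sqrt 3) * ennreal (s\<^sup>2 * Qf (fst z - real i) (snd z - real j))"
      using mle by (intro mult_left_mono ennreal_leI) auto
    also have "\<dots> = ennreal (4 / sqrt 3 * s\<^sup>2) * ennreal (Qf (fst z - real i) (snd z - real j))"
      by (simp add: ennreal_mult'[symmetric] Qf_nonneg mult.assoc)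
    also have "\<dots> \<le> ennreal (4 / sqrt 3 * s\<^sup>2) * Hb n k z"
      using hb by (intro mult_left_mono) auto
    finally show ?thesis .
  qed
  have "(\<integral>\<^sup>+x. ennreal (m x) \<partial>unif_triangle) = (\<integral>\<^sup>+x. G x \<partial>lborel)"
    unfolding unif_triangle_def G_def using m_meas by (subst nn_integral_density) auto
  also have "\<dots> = ennreal (s\<^sup>2 * sqrt 3/2) * (\<integral>\<^sup>+z. G (psi o1 o2 s z) \<partial>lborel)"
    by (rule transfer[OF G_meas s0])
  also have "\<dots> \<le> ennreal (s\<^sup>2 * sqrt 3/2) * (\<integral>\<^sup>+z. ennreal (4 / sqrt 3 * s\<^sup>2) * Hb n k z \<partial>lborel)"
    by (intro mult_left_mono nn_integral_mono pw) auto
  also have "\<dots> = ennreal (s\<^sup>2 * sqrt 3/2) * (ennreal (4 / sqrt 3 * s\<^sup>2) * ennreal total)"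
    using n2 by (simp add: nn_integral_cmult int_Hb[OF k0 k1 k2] total_def)
  also have "\<dots> = ennreal (2 * s^4 * total)"
  proof -
    have "0 \<le> total" using k0 by (simp add: total_def)
    then have "ennreal (s\<^sup>2 * sqrt 3/2) * (ennreal (4 / sqrt 3 * s\<^sup>2) * ennreal total)
        = ennreal ((s\<^sup>2 * sqrt 3/2) * ((4 / sqrt 3 * s\<^sup>2) * total))"
      by (simp add: ennreal_mult'[symmetric] mult.assoc)
    also have "(s\<^sup>2 * sqrt 3/2) * ((4 / sqrt 3 * s\<^sup>2) * total) = 2 * s^4 * total"
      by (simp add: field_simps power2_eq_square eval_nat_numeral)
    finally show ?thesis .
  qed
  finally have nnle: "(\<integral>\<^sup>+x. ennreal (m x) \<partial>unif_triangle) \<le> ennreal (2 * s^4 * total)" .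
  have "distortion unif_triangle \<alpha> = enn2real (\<integral>\<^sup>+x. ennreal (m x) \<partial>unif_triangle)"
    unfolding distortion_def m_def[symmetric]
    by (rule integral_eq_nn_integral) (use m_meas m_nonneg in \<open>auto simp: unif_triangle_def\<close>)
  also have "\<dots> \<le> 2 * s^4 * total"
    using nnle k0 s0 by (intro enn2real_leI) (auto simp: total_def)
  also have "\<dots> \<le> tri_bound N"
  proof -
    have "2 * s^4 * total \<le> (45 * (real n+1) ^ 3 - 28 * (9*k) * (real n+1) ^ 2 + (301 - 28 * (9*k)) * (real n+1) - 98) / (324 * (real n+1) ^ 3 * (real n)\<^sup>2)"
      using num_ineq[OF k2 k0, of "real n"] n2 by (simp add: s_def total_def)
    also have "\<dots> = tri_bound N"
      unfolding tri_bound_def rN by (simp add: k_def)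
    finally show ?thesis .
  qed
  finally have dle: "distortion unif_triangle \<alpha> \<le> tri_bound N" .
  have mem: "distortion unif_triangle \<alpha> \<in> {distortion unif_triangle \<alpha> | \<alpha>. finite \<alpha> \<and> \<alpha> \<noteq> {} \<and> card \<alpha> \<le> N * (N + 1) div 2}"
    using fin ne card by blast
  have bdd: "bdd_below {distortion unif_triangle \<alpha> | \<alpha>. finite \<alpha> \<and> \<alpha> \<noteq> {} \<and> card \<alpha> \<le> N * (N + 1) div 2}"
  proof (rule bdd_belowI[of _ 0], clarify)
    fix \<beta> :: "(real^2) set" assume "finite \<beta>" "\<beta> \<noteq> {}"
    then show "0 \<le> distortion unif_triangle \<beta>"
      unfolding distortion_def by (intro integral_nonneg_AE AE_I2 Min.boundedI) auto
  qed
  have "quant_err unif_triangle (N * (N + 1) div 2) \<le> distortion unif_triangle \<alpha>"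
    unfolding quant_err_def by (rule cInf_lower[OF mem bdd])
  then show ?thesis using dle by linarith
qed

lemma asy_alg:
  fixes x a :: real assumes "x \<noteq> 0" "x - 1 \<noteq> 0"
  shows "(45 * x ^ 3 - a * x ^ 2 + (301 - a) * x - 98) / (324 * x ^ 3 * (x - 1)\<^sup>2) - (5 / (36 * x ^ 2) - (a/2 - 45) / (162 * x ^ 3))
     = ((436 - 3*a)/324) * (x / (x ^3 * (x - 1)^2)) + ((a - 188)/324) * (1 / (x ^3 * (x - 1)^2))"
proof -
  have "(45 * x ^ 3 - a * x ^ 2 + (301 - a) * x - 98) / (324 * x ^ 3 * (x - 1)\<^sup>2) - (5 / (36 * x ^ 2) - (a/2 - 45) / (162 * x ^ 3))
    = ((45 * x ^ 3 - a * x ^ 2 + (301 - a) * x - 98) - (x-1)^2 * (45*x - a + 90)) / (324 * x ^ 3 * (x - 1)\<^sup>2)"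
    using assms apply (simp add: field_simps)
    by (simp add: algebra_simps eval_nat_numeral)
  also have "\<dots> = ((436 - 3*a) * x + (a - 188)) / (324 * x ^ 3 * (x - 1)\<^sup>2)"
    by (simp add: algebra_simps eval_nat_numeral)
  also have "\<dots> = ((436 - 3*a)/324) * (x / (x ^3 * (x - 1)^2)) + ((a - 188)/324) * (1 / (x ^3 * (x - 1)^2))"
    using assms by (simp add: field_simps)
  finally show ?thesis .
qed

lemma asy: "(\<lambda>N. tri_bound N - (5 / (36 * real N ^ 2) - (14 * sqrt 21 - 45) / (162 * real N ^ 3)))
        \<in> O(\<lambda>N. 1 / real N ^ 4)"
proof -
  define a where "a = 28 * sqrt 21"
  have eq: "tri_bound N - (5 / (36 * real N ^ 2) - (14 * sqrt 21 - 45) / (162 * real N ^ 3))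
     = ((436 - 3*a)/324) * (real N / (real N ^3 * (real N - 1)^2)) + ((a - 188)/324) * (1 / (real N ^3 * (real N - 1)^2))"
    if "N \<ge> 2" for N
  proof -
    have "real N - 1 \<noteq> 0" "real N \<noteq> 0" using that by auto
    moreover have "14 * sqrt 21 = a/2" by (simp add: a_def)
    ultimately show ?thesis unfolding tri_bound_def 
      using asy_alg[of "real N" a] by (simp add: a_def)
  qed
  have 1: "(\<lambda>N::nat. real N / (real N ^3 * (real N - 1)^2)) \<in> O(\<lambda>N. 1 / real N ^ 4)" by real_asymp
  have 2: "(\<lambda>N::nat. 1 / (real N ^3 * (real N - 1)^2)) \<in> O(\<lambda>N. 1 / real N ^ 4)" by real_asymp
  have main: "(\<lambda>N. ((436 - 3*a)/324) * (real N / (real N ^3 * (real N - 1)^2)) + ((a - 188)/324) * (1 / (real N ^3 * (real N - 1)^2))) \<in> O(\<lambda>N. 1 / real N ^ 4)"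
    apply (rule sum_in_bigo) apply (simp only: cmult_in_bigo_iff 1 simp_thms) by (simp only: cmult_in_bigo_iff 2 simp_thms) 
  have ev: "eventually (\<lambda>N. ((436 - 3*a)/324) * (real N / (real N ^3 * (real N - 1)^2)) + ((a - 188)/324) * (1 / (real N ^3 * (real N - 1)^2))
     = tri_bound N - (5 / (36 * real N ^ 2) - (14 * sqrt 21 - 45) / (162 * real N ^ 3))) sequentially"
    by (rule eventually_mono[OF eventually_ge_at_top[of "2::nat"]]) (rule eq[symmetric])
  show ?thesis by (rule iffD1[OF landau_o.big.in_cong[OF ev] main])
qed

theorem theorem6p3:
  shows "(\<forall>N::nat. N \<ge> 3 \<longrightarrow> quant_err unif_triangle (N * (N + 1) div 2) \<le> tri_bound N)
    \<and> (\<lambda>N. tri_bound N - (5 / (36 * real N ^ 2) - (14 * sqrt 21 - 45) / (162 * real N ^ 3)))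
        \<in> O(\<lambda>N. 1 / real N ^ 4)"
  using part1 asy by blast

end
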